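(* Let $X$ be a set, $B=(B,+,0)$ a unitary magma and $(A,k,q,s,p)$ a retraction point from $X$ to $B$. Then for all $x,x'\in X$ and $b,b'\in B$: (a) $k(q(0))=0$ and $q(k(x)+k(q(0)))=x=q(k(q(0))+k(x))$; (b) $q(k(x)+s(b))=q((k(x)+0)+(0+s(b)))=q((k(x)+s(b))+(0+0))=q((0+0)+(k(x)+s(b)))$; (c) $q(s(b)+s(b'))=q(0)$; (d) $q\big((k(x)+s(b))+(k(x')+s(b'))\big)=q\big(k(w)+s(b+b')\big)$, where $u=q(k(x)+s(b))$, $v=q(k(x')+s(b'))$ and $w=q\big((k(u)+s(b))+(k(v)+s(b'))\big)$.
   Context: A unitary magma is a set with a binary operation $+$ and an element $0$ with $b+0=b=0+b$ for all $b$; morphisms preserve $+$ and $0$. Given a set $X$ and a unitary magma $B$, a retraction point from $X$ to $B$ is a tuple $(A,k,q,s,p)$ where $A=(A,+,0)$ is a unitary magma, $k\colon X\to A$ and $q\colon A\to X$ are maps, $s\colon B\to A$ and $p\colon A\to B$ are morphisms of unitary magmas, and $p(s(b))=b$, $q(k(x))=x$, $p(k(x))=0$, $q(s(b))=q(0)$, and $k(q(a))+s(p(a))=a$ for all $x\in X$, $b\in B$, $a\in A$. *)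

theory Defs
  imports Main
begin

definition unitary_magma :: "('a \<Rightarrow> 'a \<Rightarrow> 'a) \<Rightarrow> 'a \<Rightarrow> bool" where
  "unitary_magma add z \<longleftrightarrow> (\<forall>b. add b z = b \<and> add z b = b)"

definition um_morphism ::
  "('a \<Rightarrow> 'a \<Rightarrow> 'a) \<Rightarrow> 'a \<Rightarrow> ('b \<Rightarrow> 'b \<Rightarrow> 'b) \<Rightarrow> 'b \<Rightarrow> ('a \<Rightarrow> 'b) \<Rightarrow> bool" where
  "um_morphism addA zA addB zB f \<longleftrightarrow>
     (\<forall>x y. f (addA x y) = addB (f x) (f y)) \<and> f zA = zB"

definition retraction_point ::
  "('b \<Rightarrow> 'b \<Rightarrow> 'b) \<Rightarrow> 'b \<Rightarrow> ('a \<Rightarrow> 'a \<Rightarrow> 'a) \<Rightarrow> 'a \<Rightarrow>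
   ('x \<Rightarrow> 'a) \<Rightarrow> ('a \<Rightarrow> 'x) \<Rightarrow> ('b \<Rightarrow> 'a) \<Rightarrow> ('a \<Rightarrow> 'b) \<Rightarrow> bool" where
  "retraction_point addB zB addA zA k q s p \<longleftrightarrow>
     unitary_magma addA zA \<and>
     um_morphism addB zB addA zA s \<and> um_morphism addA zA addB zB p \<and>
     (\<forall>b. p (s b) = b) \<and> (\<forall>x. q (k x) = x) \<and> (\<forall>x. p (k x) = zB) \<and>
     (\<forall>b. q (s b) = q zA) \<and> (\<forall>a. addA (k (q a)) (s (p a)) = a)"

end

theory Submission
  imports Defs
begin

theorem proposition2p2:
  fixes addB :: "'b \<Rightarrow> 'b \<Rightarrow> 'b" and zB :: 'b
    and addA :: "'a \<Rightarrow> 'a \<Rightarrow> 'a" and zA :: 'a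
    and k :: "'x \<Rightarrow> 'a" and q :: "'a \<Rightarrow> 'x" and s :: "'b \<Rightarrow> 'a" and p :: "'a \<Rightarrow> 'b"
  assumes "unitary_magma addB zB"
    and "retraction_point addB zB addA zA k q s p"
  shows "\<forall>x x' b b'.
     (k (q zA) = zA \<and>
      q (addA (k x) (k (q zA))) = x \<and> x = q (addA (k (q zA)) (k x))) \<and>
     (q (addA (k x) (s b)) = q (addA (addA (k x) zA) (addA zA (s b))) \<and>
      q (addA (addA (k x) zA) (addA zA (s b))) = q (addA (addA (k x) (s b)) (addA zA zA)) \<and>
      q (addA (addA (k x) (s b)) (addA zA zA)) = q (addA (addA zA zA) (addA (k x) (s b)))) \<and>
     (q (addA (s b) (s b')) = q zA) \<and>
     (let u = q (addA (k x) (s b));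
          v = q (addA (k x') (s b'));
          w = q (addA (addA (k u) (s b)) (addA (k v) (s b')))
      in q (addA (addA (k x) (s b)) (addA (k x') (s b'))) = q (addA (k w) (s (addB b b'))))"
proof -
  note R = assms(2)[unfolded retraction_point_def um_morphism_def unitary_magma_def]
  have U: "\<And>a. addA a zA = a" "\<And>a. addA zA a = a" using R by auto
  have UB: "\<And>a. addB a zB = a" "\<And>a. addB zB a = a" using assms(1) unfolding unitary_magma_def by auto
  have sh: "\<And>c d. s (addB c d) = addA (s c) (s d)" and s0: "s zB = zA" using R by auto
  have ph: "\<And>c d. p (addA c d) = addB (p c) (p d)" and p0: "p zA = zB" using R by auto
  have ps: "\<And>c. p (s c) = c" and qk: "\<And>y. q (k y) = y" and pk: "\<And>y. p (k y) = zB"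
    and qs: "\<And>c. q (s c) = q zA" and dec: "\<And>a. addA (k (q a)) (s (p a)) = a" using R by auto
  have kq0: "k (q zA) = zA" using dec[of zA] p0 s0 U by simp
  have pa: "\<And>y c. p (addA (k y) (s c)) = c" using ph pk ps UB by simp
  have re: "\<And>y c. addA (k (q (addA (k y) (s c)))) (s c) = addA (k y) (s c)"
    using dec pa by metis
  have d: "q (addA (addA (k x) (s b)) (addA (k x') (s b'))) =
    q (addA (k (q (addA (addA (k (q (addA (k x) (s b)))) (s b)) (addA (k (q (addA (k x') (s b')))) (s b'))))) (s (addB b b')))" for x x' b b'
    unfolding re
  proof -
    let ?a = "addA (addA (k x) (s b)) (addA (k x') (s b'))"
    have "p ?a = addB b b'" using ph pa by simp
    then show "q ?a = q (addA (k (q ?a)) (s (addB b b')))" using dec[of ?a] by simp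
  qed
  show ?thesis
    unfolding Let_def
  proof (intro allI conjI)
    fix x x' b b'
    show "k (q zA) = zA" by (rule kq0)
    show "q (addA (k x) (k (q zA))) = x" by (simp only: kq0 U qk)
    show "x = q (addA (k (q zA)) (k x))" by (simp only: kq0 U qk)
    show "q (addA (k x) (s b)) = q (addA (addA (k x) zA) (addA zA (s b)))" by (simp only: U)
    show "q (addA (addA (k x) zA) (addA zA (s b))) = q (addA (addA (k x) (s b)) (addA zA zA))" by (simp only: U)
    show "q (addA (addA (k x) (s b)) (addA zA zA)) = q (addA (addA zA zA) (addA (k x) (s b)))" by (simp only: U)
    show "q (addA (s b) (s b')) = q zA" by (simp only: sh[symmetric] qs)
    show "q (addA (addA (k x) (s b)) (addA (k x') (s b'))) =
    q (addA (k (q (addA (addA (k (q (addA (k x) (s b)))) (s b)) (addA (k (q (addA (k x') (s b')))) (s b'))))) (s (addB b b')))"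
      by (rule d)
  qed
qed

end
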